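(* For the system $S'=\Lambda-\beta\frac{SB}{B+D}-(\mu+\psi)S+wR$, $V'=\psi S-\sigma\beta\frac{VB}{B+D}-\mu V$, $I'=\beta\frac{SB}{B+D}+\sigma\beta\frac{VB}{B+D}-(\mu+\gamma)I$, $R'=\gamma I-(\mu+w)R$, $B'=\eta I-\delta B$, there exist parameter values for which ${\cal R}_0<1$ and there exist exactly two positive steady states, one stable and one unstable.
   Context: All parameters $\Lambda,\beta,D,\mu,\psi,w,\sigma,\gamma,\eta,\delta$ are positive constants. The disease-free equilibrium is $(S_0,V_0,0,0,0)$ with $S_0=\frac{\Lambda}{\mu+\psi}$, $V_0=\frac{\Lambda\psi}{\mu(\mu+\psi)}$, and the basic reproductive ratio is ${\cal R}_0=\frac{\eta\beta(S_0+\sigma V_0)}{D\delta(\mu+\gamma)}$. A positive steady state is a steady state with all components positive. *)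

theory Defs
  imports "HOL-Analysis.Analysis" "HOL-Library.Numeral_Type"
begin

type_synonym params = "real \<times> real \<times> real \<times> real \<times> real \<times> real \<times> real \<times> real \<times> real \<times> real"

definition vec5 :: "real \<Rightarrow> real \<Rightarrow> real \<Rightarrow> real \<Rightarrow> real \<Rightarrow> real^5" where
  "vec5 a b c d e = (\<chi> i. if i = 1 then a else if i = 2 then b else if i = 3 then c
                          else if i = 4 then d else e)"

definition sys :: "params \<Rightarrow> real^5 \<Rightarrow> real^5" where
  "sys p x = (case p of (Lam, \<beta>, D, \<mu>, \<psi>, w, \<sigma>, \<gamma>, \<eta>, \<delta>) \<Rightarrow>
     (let S = x$1; V = x$2; I = x$3; R = x$4; B = x$5 in
      vec5 (Lam - \<beta> * (S * B / (B + D)) - (\<mu> + \<psi>) * S + w * R)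
           (\<psi> * S - \<sigma> * \<beta> * (V * B / (B + D)) - \<mu> * V)
           (\<beta> * (S * B / (B + D)) + \<sigma> * \<beta> * (V * B / (B + D)) - (\<mu> + \<gamma>) * I)
           (\<gamma> * I - (\<mu> + w) * R)
           (\<eta> * I - \<delta> * B)))"

definition params_pos :: "params \<Rightarrow> bool" where
  "params_pos p = (case p of (Lam, \<beta>, D, \<mu>, \<psi>, w, \<sigma>, \<gamma>, \<eta>, \<delta>) \<Rightarrow>
     Lam > 0 \<and> \<beta> > 0 \<and> D > 0 \<and> \<mu> > 0 \<and> \<psi> > 0 \<and> w > 0 \<and> \<sigma> > 0 \<and> \<gamma> > 0 \<and> \<eta> > 0 \<and> \<delta> > 0)"

definition R0 :: "params \<Rightarrow> real" where
  "R0 p = (case p of (Lam, \<beta>, D, \<mu>, \<psi>, w, \<sigma>, \<gamma>, \<eta>, \<delta>) \<Rightarrow>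
     (let S0 = Lam / (\<mu> + \<psi>); V0 = Lam * \<psi> / (\<mu> * (\<mu> + \<psi>)) in
      \<eta> * \<beta> * (S0 + \<sigma> * V0) / (D * \<delta> * (\<mu> + \<gamma>))))"

definition steady_state :: "params \<Rightarrow> real^5 \<Rightarrow> bool" where
  "steady_state p x \<longleftrightarrow> sys p x = 0"

definition positive_state :: "real^5 \<Rightarrow> bool" where
  "positive_state x \<longleftrightarrow> (\<forall>i. x$i > 0)"

definition jacobian :: "params \<Rightarrow> real^5 \<Rightarrow> real^5^5" where
  "jacobian p x = matrix (frechet_derivative (sys p) (at x))"

definition eigenvalue :: "real^'n^'n \<Rightarrow> complex \<Rightarrow> bool" where
  "eigenvalue A z \<longleftrightarrow> det ((\<chi> i j. (if i = j then z else 0) - complex_of_real (A$i$j)) :: complex^'n^'n) = 0"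

definition stable_ss :: "params \<Rightarrow> real^5 \<Rightarrow> bool" where
  "stable_ss p x \<longleftrightarrow> (\<forall>z. eigenvalue (jacobian p x) z \<longrightarrow> Re z < 0)"

definition unstable_ss :: "params \<Rightarrow> real^5 \<Rightarrow> bool" where
  "unstable_ss p x \<longleftrightarrow> (\<exists>z. eigenvalue (jacobian p x) z \<and> Re z > 0)"

end

theory Submission
  imports Defs
begin

lemma exhaust_5:
  fixes x :: 5
  shows "x = 1 \<or> x = 2 \<or> x = 3 \<or> x = 4 \<or> x = 5"
proof (induct x)
  case (of_int z)
  then have "z = 0 \<or> z = 1 \<or> z = 2 \<or> z = 3 \<or> z = 4" by fastforce
  then show ?case by auto
qed
lemma UNIV_5: "UNIV = {1, 2, 3, 4, 5::5}"
  using exhaust_5 by auto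
lemma sum_5: "sum f (UNIV::5 set) = f 1 + f 2 + f 3 + f 4 + f 5"
  unfolding UNIV_5 by (simp add: add.assoc)
lemma vec5_nth[simp]: "vec5 a b c d e $ 1 = a" "vec5 a b c d e $ 2 = b" "vec5 a b c d e $ 3 = c"
  "vec5 a b c d e $ 4 = d" "vec5 a b c d e $ 5 = e"
  by (simp_all add: vec5_def)
lemma vec5_axis: "vec5 a b c d e = a *\<^sub>R axis 1 1 + b *\<^sub>R axis 2 1 + c *\<^sub>R axis 3 1 + d *\<^sub>R axis 4 1 + e *\<^sub>R axis 5 1"
  unfolding vec_eq_iff using exhaust_5 by (auto simp: axis_def)

definition qd :: "real \<Rightarrow> real^5 \<Rightarrow> 5 \<Rightarrow> real^5 \<Rightarrow> real" where
  "qd D x a h = h$a * x$5 / (x$5 + D) + x$a * D / (x$5 + D)^2 * h$5"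

lemma qd_alg:
  fixes S B D ha h5 :: real
  assumes "B + D \<noteq> 0"
  shows "(S * h5 + ha * B) / (B + D) - S * B * (inverse (B + D) * h5 * inverse (B + D)) =
     ha * B / (B + D) + S * D * h5 / (B + D)^2"
proof -
  have "S * B * (inverse (B + D) * h5 * inverse (B + D)) = S * B * h5 / (B+D)^2"
    by (simp add: power2_eq_square divide_inverse)
  moreover have "(S * h5 + ha * B) / (B + D) = ha * B / (B + D) + S * (B + D) * h5 / (B + D)^2"
    using assms by (simp add: power2_eq_square add_divide_distrib)
  ultimately show ?thesis by (simp add: algebra_simps add_divide_distrib diff_divide_distrib)
qed

lemma qd_deriv:
  assumes B: "x$5 + D \<noteq> 0"
  shows "((\<lambda>x. x$a * x$5 / (x$5 + D)) has_derivative qd D x a) (at x)"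
proof -
  have d: "((\<lambda>x. x $ i) has_derivative (\<lambda>h. h $ i)) (at x)" for i :: 5
    by (rule bounded_linear_imp_has_derivative[OF bounded_linear_vec_nth])
  show ?thesis
    apply (rule has_derivative_eq_rhs)
    apply (rule derivative_eq_intros d | use B in simp)+
    apply (rule ext)
    using B apply (simp add: qd_def qd_alg)
    done
qed

definition dsys :: "params \<Rightarrow> real^5 \<Rightarrow> real^5 \<Rightarrow> real^5" where
  "dsys p x h = (case p of (Lam, \<beta>, D, \<mu>, \<psi>, w, \<sigma>, \<gamma>, \<eta>, \<delta>) \<Rightarrow>
      vec5 (- \<beta> * qd D x 1 h - (\<mu> + \<psi>) * h$1 + w * h$4)
           (\<psi> * h$1 - \<sigma> * \<beta> * qd D x 2 h - \<mu> * h$2)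
           (\<beta> * qd D x 1 h + \<sigma> * \<beta> * qd D x 2 h - (\<mu> + \<gamma>) * h$3)
           (\<gamma> * h$3 - (\<mu> + w) * h$4)
           (\<eta> * h$3 - \<delta> * h$5))"

lemma sys_deriv:
  assumes p: "p = (Lam, \<beta>, D, \<mu>, \<psi>, w, \<sigma>, \<gamma>, \<eta>, \<delta>)" and B: "x$5 + D \<noteq> 0"
  shows "(sys p has_derivative dsys p x) (at x)"
proof -
  have e: "sys p = (\<lambda>x. (Lam - \<beta> * (x$1 * x$5 / (x$5 + D)) - (\<mu> + \<psi>) * x$1 + w * x$4) *\<^sub>R axis 1 1
     + (\<psi> * x$1 - \<sigma> * \<beta> * (x$2 * x$5 / (x$5 + D)) - \<mu> * x$2) *\<^sub>R axis 2 1
     + (\<beta> * (x$1 * x$5 / (x$5 + D)) + \<sigma> * \<beta> * (x$2 * x$5 / (x$5 + D)) - (\<mu> + \<gamma>) * x$3) *\<^sub>R axis 3 1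
     + (\<gamma> * x$3 - (\<mu> + w) * x$4) *\<^sub>R axis 4 1 + (\<eta> * x$3 - \<delta> * x$5) *\<^sub>R axis 5 1)"
    by (rule ext) (simp add: sys_def p Let_def vec5_axis)
  have d: "((\<lambda>x. x $ i) has_derivative (\<lambda>h. h $ i)) (at x)" for i :: 5
    by (rule bounded_linear_imp_has_derivative[OF bounded_linear_vec_nth])
  note q = qd_deriv[OF B]
  show ?thesis unfolding e
    apply (rule has_derivative_eq_rhs)
    apply (rule q d derivative_eq_intros refl B)+
    apply (rule ext)
    apply (simp add: dsys_def p vec5_axis algebra_simps)
    done
qed
lemma vec5_eq: "x = vec5 a b c d e \<longleftrightarrow> x$1 = a \<and> x$2 = b \<and> x$3 = c \<and> x$4 = d \<and> x$5 = e"
  unfolding vec_eq_iff using exhaust_5 by (metis vec5_nth)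
lemma vec5_0: "vec5 a b c d e = 0 \<longleftrightarrow> a = 0 \<and> b = 0 \<and> c = 0 \<and> d = 0 \<and> e = 0"
  unfolding vec_eq_iff using exhaust_5 by (metis vec5_nth zero_index)
lemma pos5: "positive_state x \<longleftrightarrow> x$1 > 0 \<and> x$2 > 0 \<and> x$3 > 0 \<and> x$4 > 0 \<and> x$5 > 0"
  unfolding positive_state_def using exhaust_5 by metis

definition p0 :: params where "p0 = (1, 4, 1, 1/20, 1, 239/20, 1/20, 1, 163/1200, 1)"
definition xs :: "real^5" where "xs = vec5 (2160/1793) (32400/1793) (1200/1793) (100/1793) (1/11)"
definition xu :: "real^5" where "xu = vec5 (560/489) (8960/489) (80/163) (20/489) (1/15)"

lemma sys_p0: "sys p0 x = vec5 (1 - 4 * (x$1 * x$5 / (x$5 + 1)) - 21/20 * x$1 + 239/20 * x$4)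
   (x$1 - 1/5 * (x$2 * x$5 / (x$5 + 1)) - 1/20 * x$2)
   (4 * (x$1 * x$5 / (x$5 + 1)) + 1/5 * (x$2 * x$5 / (x$5 + 1)) - 21/20 * x$3)
   (x$3 - 12 * x$4) (163/1200 * x$3 - x$5)"
  by (simp add: sys_def p0_def Let_def)

lemma ss_xs: "positive_state xs \<and> steady_state p0 xs"
  by (simp add: pos5 steady_state_def sys_p0 xs_def vec5_0)
lemma ss_xu: "positive_state xu \<and> steady_state p0 xu"
  by (simp add: pos5 steady_state_def sys_p0 xu_def vec5_0)

lemma ss_alg:
  fixes S V I R B :: real
  assumes pos: "S > 0" "V > 0" "I > 0" "R > 0" "B > 0"
  and e: "1 - 4 * (S * B / (B + 1)) - 21/20 * S + 239/20 * R = 0"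
     "S - 1/5 * (V * B / (B + 1)) - 1/20 * V = 0"
     "4 * (S * B / (B + 1)) + 1/5 * (V * B / (B + 1)) - 21/20 * I = 0"
     "I - 12 * R = 0" "163/1200 * I - B = 0"
  shows "(S = 2160/1793 \<and> V = 32400/1793 \<and> I = 1200/1793 \<and> R = 100/1793 \<and> B = 1/11) \<or>
         (S = 560/489 \<and> V = 8960/489 \<and> I = 80/163 \<and> R = 20/489 \<and> B = 1/15)"
proof -
  have B1: "B + 1 > 0" using pos by simp
  have I: "I = 1200 * B / 163" using e(5) by simp
  have R: "R = 100 * B / 163" using e(4) I by simp
  have V: "V * (5 * B + 1) = 20 * (B + 1) * S"
    using e(2) B1 pos by (simp add: field_simps)
  have S: "163 * S * (101 * B + 21) = (B + 1) * (3260 + 23900 * B)"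
    using e(1) B1 pos R by (simp add: field_simps)
  have B1': "B + 1 \<noteq> 0" using B1 by simp
  have a1: "(S * B / (B + 1)) * (B + 1) = S * B" and a2: "(V * B / (B + 1)) * (B + 1) = V * B"
    using B1' by simp_all
  have aux: "\<And>X Y c :: real. (4*X + 1/5*Y)*c = 4*(X*c) + 1/5*(Y*c)" by (simp add: algebra_simps)
  have "4 * (S * B / (B + 1)) + 1/5 * (V * B / (B + 1)) = 21/20 * I" using e(3) by linarith
  then have "(4 * (S * B / (B + 1)) + 1/5 * (V * B / (B + 1))) * (B + 1) = 21/20 * I * (B + 1)" by simp
  then have "4 * S * B + 1/5 * V * B = 21/20 * I * (B + 1)" unfolding aux a1 a2 by simp
  then have "B * (4 * S + 1/5 * V) = B * (1260 * (B + 1) / 163)" unfolding I by (simp add: algebra_simps)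
  then have "4 * S + 1/5 * V = 1260 * (B + 1) / 163" using pos(5) by simp
  then have L: "163 * (20 * S + V) = 6300 * (B + 1)" by (simp add: field_simps)
  have id: "163 * (20 * S + V) * ((5 * B + 1) * (101 * B + 21)) =
    20 * (6 * B + 2) * (163 * S * (101 * B + 21)) + 163 * (101 * B + 21) * (V * (5 * B + 1) - 20 * (B + 1) * S)"
    by (simp add: algebra_simps)
  have "(B + 1) * (20 * (6 * B + 2) * (3260 + 23900 * B)) = (B + 1) * (6300 * (5 * B + 1) * (101 * B + 21))"
    using id unfolding L S V by (simp add: algebra_simps)
  then have "20 * (6 * B + 2) * (3260 + 23900 * B) = 6300 * (5 * B + 1) * (101 * B + 21)"
    using B1 by simp
  then have "3135 * B^2 - 494 * B + 19 = 0"
    by (simp add: algebra_simps power2_eq_square)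
  then have "(15 * B - 1) * (11 * B - 1) = 0"
    by (simp add: algebra_simps power2_eq_square)
  then have "B = 1/15 \<or> B = 1/11" by auto
  then show ?thesis
  proof
    assume b: "B = 1/15"
    have s: "S = 560/489" using S b by (simp add: field_simps)
    have "V * (4/3) = 20 * (16/15) * (560/489)" using V b s by simp
    then have "V = 8960/489" by simp
    then show ?thesis using b s I R by (simp add: field_simps)
  next
    assume b: "B = 1/11"
    have s: "S = 2160/1793" using S b by (simp add: field_simps)
    have "V * (16/11) = 20 * (12/11) * (2160/1793)" using V b s by simp
    then have "V = 32400/1793" by simp
    then show ?thesis using b s I R by (simp add: field_simps)
  qed
qed

lemma ss_only:
  assumes "positive_state x" "steady_state p0 x"
  shows "x = xs \<or> x = xu"
proof -
  have pos: "x$1 > 0" "x$2 > 0" "x$3 > 0" "x$4 > 0" "x$5 > 0"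
    using assms(1) by (auto simp: pos5)
  have e: "1 - 4 * (x$1 * x$5 / (x$5 + 1)) - 21/20 * x$1 + 239/20 * x$4 = 0"
     "x$1 - 1/5 * (x$2 * x$5 / (x$5 + 1)) - 1/20 * x$2 = 0"
     "4 * (x$1 * x$5 / (x$5 + 1)) + 1/5 * (x$2 * x$5 / (x$5 + 1)) - 21/20 * x$3 = 0"
     "x$3 - 12 * x$4 = 0" "163/1200 * x$3 - x$5 = 0"
    using assms(2) unfolding steady_state_def sys_p0 vec5_0 by blast+
  from ss_alg[OF pos e] show ?thesis unfolding xs_def xu_def vec5_eq by blast
qed


lemma quartic_elim:
  fixes A B C E x Y :: real
  assumes W: "Y * (4*x + A) = 4*x^3 + 3*A*x^2 + 2*B*x + C"
  shows "(4*x + A)^2 * (x^4 - 6*x^2*Y + Y^2 + A*(x^3 - 3*x*Y) + B*(x^2 - Y) + C*x + E) =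
    (C^2 - A*B*C + A^2*E) + (8*A*E - 2*A^2*C - 2*A*B^2)*x + (16*E - 4*A*C - 4*B^2 - 8*A^2*B)*x^2
    - (32*A*B + 8*A^3)*x^3 - (32*B + 48*A^2)*x^4 - 96*A*x^5 - 64*x^6"
proof -
  let ?N = "4*x^3 + 3*A*x^2 + 2*B*x + C"
  let ?T = "6*x^2 + 3*A*x + B"
  let ?P = "x^4 + A*x^3 + B*x^2 + C*x + E"
  have "(4*x + A)^2 * (x^4 - 6*x^2*Y + Y^2 + A*(x^3 - 3*x*Y) + B*(x^2 - Y) + C*x + E) =
     (Y * (4*x + A))^2 - ?T * (4*x + A) * (Y * (4*x + A)) + (4*x + A)^2 * ?P"
    by (simp add: algebra_simps power2_eq_square eval_nat_numeral)
  also have "\<dots> = ?N^2 - ?T * (4*x + A) * ?N + (4*x + A)^2 * ?P" unfolding W ..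
  also have "\<dots> = (C^2 - A*B*C + A^2*E) + (8*A*E - 2*A^2*C - 2*A*B^2)*x + (16*E - 4*A*C - 4*B^2 - 8*A^2*B)*x^2
    - (32*A*B + 8*A^3)*x^3 - (32*B + 48*A^2)*x^4 - 96*A*x^5 - 64*x^6"
    by (simp add: algebra_simps power2_eq_square eval_nat_numeral)
  finally show ?thesis .
qed

lemma quartic_nz:
  fixes A B C E :: real and z :: complex
  assumes pos: "A > 0" "B > 0" "C > 0" "E > 0"
    and g0: "C^2 - A*B*C + A^2*E < 0" and g1: "8*A*E - 2*A^2*C - 2*A*B^2 \<le> 0"
    and g2: "16*E - 4*A*C - 4*B^2 - 8*A^2*B \<le> 0"
    and rz: "Re z \<ge> 0"
  shows "z^4 + of_real A * z^3 + of_real B * z^2 + of_real C * z + of_real E \<noteq> 0"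
proof
  assume q0: "z^4 + of_real A * z^3 + of_real B * z^2 + of_real C * z + of_real E = 0"
  obtain x y where z: "z = Complex x y" by (metis complex.exhaust)
  have x: "x \<ge> 0" using rz z by simp
  have ri: "Re (z^4 + of_real A * z^3 + of_real B * z^2 + of_real C * z + of_real E) =
      x^4 - 6*x^2*y^2 + y^4 + A*(x^3 - 3*x*y^2) + B*(x^2 - y^2) + C*x + E"
    "Im (z^4 + of_real A * z^3 + of_real B * z^2 + of_real C * z + of_real E) =
      y * (4*x^3 - 4*x*y^2 + A*(3*x^2 - y^2) + 2*B*x + C)"
    unfolding z by (simp_all add: eval_nat_numeral algebra_simps)
  have re: "x^4 - 6*x^2*y^2 + (y^2)^2 + A*(x^3 - 3*x*y^2) + B*(x^2 - y^2) + C*x + E = 0"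
    using q0 ri(1) by (simp add: power_mult[symmetric])
  have im: "y * (4*x^3 - 4*x*y^2 + A*(3*x^2 - y^2) + 2*B*x + C) = 0"
    using q0 ri(2) by simp
  have p: "x^4 \<ge> 0" "x^3 \<ge> 0" "x^2 \<ge> 0" "x^5 \<ge> 0" "x^6 \<ge> 0" using x by simp_all
  show False
  proof (cases "y = 0")
    case True
    have "A * x^3 \<ge> 0" "B * x^2 \<ge> 0" "C * x \<ge> 0" using p pos x by simp_all
    moreover have "x^4 + A*x^3 + B*x^2 + C*x + E = 0" using re True by simp
    ultimately show False using p pos by linarith
  next
    case False
    then have s0: "4*x^3 - 4*x*y^2 + A*(3*x^2 - y^2) + 2*B*x + C = 0" using im by simp
    have W: "y^2 * (4*x + A) = 4*x^3 + 3*A*x^2 + 2*B*x + C"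
      using s0 by (simp add: algebra_simps)
    have G: "(4*x + A)^2 * 0 =
    (C^2 - A*B*C + A^2*E) + (8*A*E - 2*A^2*C - 2*A*B^2)*x + (16*E - 4*A*C - 4*B^2 - 8*A^2*B)*x^2
    - (32*A*B + 8*A^3)*x^3 - (32*B + 48*A^2)*x^4 - 96*A*x^5 - 64*x^6"
      using quartic_elim[OF W, of E] re by simp
    have "(8*A*E - 2*A^2*C - 2*A*B^2)*x \<le> 0" using g1 x by (simp add: mult_nonpos_nonneg)
    moreover have "(16*E - 4*A*C - 4*B^2 - 8*A^2*B)*x^2 \<le> 0" using g2 p by (simp add: mult_nonpos_nonneg)
    moreover have "(32*A*B + 8*A^3)*x^3 \<ge> 0" using pos p by simp
    moreover have "(32*B + 48*A^2)*x^4 \<ge> 0" using pos p by simp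
    moreover have "96*A*x^5 \<ge> 0" using pos p by simp
    ultimately show False using G g0 p by simp
  qed
qed


lemma eig_iff:
  fixes A :: "real^'n^'n" and z :: complex
  shows "eigenvalue A z \<longleftrightarrow> (\<exists>v. v \<noteq> 0 \<and> (\<chi> i j. (if i = j then z else 0) - complex_of_real (A$i$j)) *v v = 0)"
proof -
  let ?M = "(\<chi> i j. (if i = j then z else 0) - complex_of_real (A$i$j)) :: complex^'n^'n"
  have "det ?M \<noteq> 0 \<longleftrightarrow> (\<forall>x. ?M *v x = 0 \<longrightarrow> x = 0)"
    unfolding invertible_det_nz[symmetric] invertible_left_inverse matrix_left_invertible_ker ..
  then show ?thesis unfolding eigenvalue_def by blast
qed

lemma mv_nth: "((\<chi> i j. (if i = j then z else 0) - complex_of_real (A$i$j)) *v v) $ i =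
   z * v$i - (\<Sum>j\<in>UNIV. complex_of_real (A$i$j) * v$j)"
proof -
  have "\<And>j. ((if i = j then z else 0) - complex_of_real (A$i$j)) * v$j =
     (if i = j then z * v$j else 0) - complex_of_real (A$i$j) * v$j"
    by (simp add: left_diff_distrib)
  then show ?thesis
    unfolding matrix_vector_mult_def by (simp add: sum_subtractf)
qed

lemma jac_entry:
  assumes p: "p = (Lam, \<beta>, D, \<mu>, \<psi>, w, \<sigma>, \<gamma>, \<eta>, \<delta>)" and B: "x$5 + D \<noteq> 0"
  shows "jacobian p x $ i $ j = dsys p x (axis j 1) $ i"
  unfolding jacobian_def frechet_derivative_at[OF sys_deriv[OF assms], symmetric] matrix_def by simp

lemma Js:
  "jacobian p0 xs $ 1 $ 1 = - 83/60"
  "jacobian p0 xs $ 1 $ 2 = 0"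
  "jacobian p0 xs $ 1 $ 3 = 0"
  "jacobian p0 xs $ 1 $ 4 = 239/20"
  "jacobian p0 xs $ 1 $ 5 = - 660/163"
  "jacobian p0 xs $ 2 $ 1 = 1"
  "jacobian p0 xs $ 2 $ 2 = - 1/15"
  "jacobian p0 xs $ 2 $ 3 = 0"
  "jacobian p0 xs $ 2 $ 4 = 0"
  "jacobian p0 xs $ 2 $ 5 = - 495/163"
  "jacobian p0 xs $ 3 $ 1 = 1/3"
  "jacobian p0 xs $ 3 $ 2 = 1/60"
  "jacobian p0 xs $ 3 $ 3 = - 21/20"
  "jacobian p0 xs $ 3 $ 4 = 0"
  "jacobian p0 xs $ 3 $ 5 = 1155/163"
  "jacobian p0 xs $ 4 $ 1 = 0"
  "jacobian p0 xs $ 4 $ 2 = 0"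
  "jacobian p0 xs $ 4 $ 3 = 1"
  "jacobian p0 xs $ 4 $ 4 = - 12"
  "jacobian p0 xs $ 4 $ 5 = 0"
  "jacobian p0 xs $ 5 $ 1 = 0"
  "jacobian p0 xs $ 5 $ 2 = 0"
  "jacobian p0 xs $ 5 $ 3 = 163/1200"
  "jacobian p0 xs $ 5 $ 4 = 0"
  "jacobian p0 xs $ 5 $ 5 = - 1"
  using jac_entry[OF p0_def, of xs]
  by (simp_all add: xs_def dsys_def qd_def axis_def p0_def power2_eq_square)

lemma Ju:
  "jacobian p0 xu $ 1 $ 1 = - 13/10"
  "jacobian p0 xu $ 1 $ 2 = 0"
  "jacobian p0 xu $ 1 $ 3 = 0"
  "jacobian p0 xu $ 1 $ 4 = 239/20"
  "jacobian p0 xu $ 1 $ 5 = - 2625/652"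
  "jacobian p0 xu $ 2 $ 1 = 1"
  "jacobian p0 xu $ 2 $ 2 = - 1/16"
  "jacobian p0 xu $ 2 $ 3 = 0"
  "jacobian p0 xu $ 2 $ 4 = 0"
  "jacobian p0 xu $ 2 $ 5 = - 525/163"
  "jacobian p0 xu $ 3 $ 1 = 1/4"
  "jacobian p0 xu $ 3 $ 2 = 1/80"
  "jacobian p0 xu $ 3 $ 3 = - 21/20"
  "jacobian p0 xu $ 3 $ 4 = 0"
  "jacobian p0 xu $ 3 $ 5 = 4725/652"
  "jacobian p0 xu $ 4 $ 1 = 0"
  "jacobian p0 xu $ 4 $ 2 = 0"
  "jacobian p0 xu $ 4 $ 3 = 1"
  "jacobian p0 xu $ 4 $ 4 = - 12"
  "jacobian p0 xu $ 4 $ 5 = 0"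
  "jacobian p0 xu $ 5 $ 1 = 0"
  "jacobian p0 xu $ 5 $ 2 = 0"
  "jacobian p0 xu $ 5 $ 3 = 163/1200"
  "jacobian p0 xu $ 5 $ 4 = 0"
  "jacobian p0 xu $ 5 $ 5 = - 1"
  using jac_entry[OF p0_def, of xu]
  by (simp_all add: xu_def dsys_def qd_def axis_def p0_def power2_eq_square)


definition qs :: "complex \<Rightarrow> complex" where
  "qs z = z^4 + 309/20*z^3 + 159767/3600*z^2 + 462679/14400*z + 209/3600"

lemma qs_nz: "Re z \<ge> 0 \<Longrightarrow> qs z \<noteq> 0"
  using quartic_nz[of "309/20" "159767/3600" "462679/14400" "209/3600" z]
  by (simp add: qs_def power2_eq_square)

lemma stab_alg:
  fixes z a1 a2 a3 a4 a5 :: complex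
  assumes rz: "Re z \<ge> 0"
  and E1: "z*a1 - (-(83/60)*a1 + 239/20*a4 - 660/163*a5) = 0"
  and E2: "z*a2 - (a1 - 1/15*a2 - 495/163*a5) = 0"
  and E3: "z*a3 - (1/3*a1 + 1/60*a2 - 21/20*a3 + 1155/163*a5) = 0"
  and E4: "z*a4 - (a3 - 12*a4) = 0"
  and E5: "z*a5 - (163/1200*a3 - a5) = 0"
  shows "a1 = 0 \<and> a2 = 0 \<and> a3 = 0 \<and> a4 = 0 \<and> a5 = 0"
proof -
  have nz: "z + 12 \<noteq> 0" "z + 1 \<noteq> 0" "z + 83/60 \<noteq> 0" "z + 1/20 \<noteq> 0" using rz by (auto simp: complex_eq_iff)
  have R4: "a4 * (z + 12) = a3" using E4 by (simp add: algebra_simps)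
  then have a4: "a4 = a3 / (z + 12)" using nz(1) by (metis nonzero_mult_div_cancel_right)
  have R5: "a5 * (z + 1) = 163/1200 * a3" using E5 by (simp add: algebra_simps)
  then have a5: "a5 = 163/1200 * a3 / (z + 1)" using nz(2) by (metis nonzero_mult_div_cancel_right)
  have R1: "a1 * (z + 83/60) = 239/20*a4 - 660/163*a5" using E1 by (simp add: algebra_simps)
  then have a1: "a1 = (239/20*a4 - 660/163*a5) / (z + 83/60)" using nz(3) by (metis nonzero_mult_div_cancel_right)
  have "(z + 1/20) * (a1 + a2 + a3 + a4) =
     (z*a1 - (-(83/60)*a1 + 239/20*a4 - 660/163*a5)) + (z*a2 - (a1 - 1/15*a2 - 495/163*a5))
     + (z*a3 - (1/3*a1 + 1/60*a2 - 21/20*a3 + 1155/163*a5)) + (z*a4 - (a3 - 12*a4))"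
    by algebra
  then have "(z + 1/20) * (a1 + a2 + a3 + a4) = 0" using E1 E2 E3 E4 by simp
  then have a2: "a2 = - (a1 + a3 + a4)" using nz(4) by (simp add: add_eq_0_iff)
  have "- (z*a2 - (a1 - 1/15*a2 - 495/163*a5)) * ((z + 12) * (z + 1) * (z + 83/60)) =
      (z + 16/15) * (z + 12) * (z + 1) * (a1 * (z + 83/60)) + (z + 1/15) * a3 * (z + 12) * (z + 1) * (z + 83/60)
      + (z + 1/15) * (z + 1) * (z + 83/60) * (a4 * (z + 12)) - 495/163 * (z + 12) * (z + 83/60) * (a5 * (z + 1))"
    unfolding a2 by algebra
  also have "\<dots> = (z + 16/15) * (239/20 * (z + 1) * (a4 * (z + 12)) - 660/163 * (z + 12) * (a5 * (z + 1)))
      + (z + 1/15) * a3 * (z + 12) * (z + 1) * (z + 83/60)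
      + (z + 1/15) * (z + 1) * (z + 83/60) * (a4 * (z + 12)) - 495/163 * (z + 12) * (z + 83/60) * (a5 * (z + 1))"
    unfolding R1 by algebra
  also have "\<dots> = (z + 16/15) * (239/20 * (z + 1) * a3 - 660/163 * (z + 12) * (163/1200 * a3))
      + (z + 1/15) * a3 * (z + 12) * (z + 1) * (z + 83/60)
      + (z + 1/15) * (z + 1) * (z + 83/60) * a3 - 495/163 * (z + 12) * (z + 83/60) * (163/1200 * a3)"
    unfolding R4 R5 ..
  also have "\<dots> = a3 * qs z"
    unfolding qs_def by algebra
  finally have key: "- (z*a2 - (a1 - 1/15*a2 - 495/163*a5)) * ((z + 12) * (z + 1) * (z + 83/60)) = a3 * qs z" .
  have "a3 * qs z = 0" using key E2 by simp
  then have "a3 = 0" using qs_nz[OF rz] by simp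
  then show ?thesis using a4 a5 a1 a2 by simp
qed


lemma stable_xs: "stable_ss p0 xs"
  unfolding stable_ss_def
proof (intro allI impI)
  fix z assume "eigenvalue (jacobian p0 xs) z"
  then obtain v where v: "v \<noteq> 0" and M: "(\<chi> i j. (if i = j then z else 0) - complex_of_real (jacobian p0 xs $i$j)) *v v = 0"
    unfolding eig_iff by blast
  have E: "z * v$i - (\<Sum>j\<in>UNIV. complex_of_real (jacobian p0 xs $i$j) * v$j) = 0" for i
    using arg_cong[OF M, of "\<lambda>u. u $ i"] unfolding mv_nth by simp
  show "Re z < 0"
  proof (rule ccontr)
    assume "\<not> Re z < 0"
    then have rz: "Re z \<ge> 0" by simp
    have E1: "z* v$1 - (-(83/60)* v$1 + 239/20* v$4 - 660/163* v$5) = 0"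
      using E[of 1] by (simp add: sum_5 Js)
    have E2: "z* v$2 - (v$1 - 1/15* v$2 - 495/163* v$5) = 0"
      using E[of 2] by (simp add: sum_5 Js)
    have E3: "z* v$3 - (1/3* v$1 + 1/60* v$2 - 21/20* v$3 + 1155/163* v$5) = 0"
      using E[of 3] by (simp add: sum_5 Js)
    have E4: "z* v$4 - (v$3 - 12* v$4) = 0"
      using E[of 4] by (simp add: sum_5 Js)
    have E5: "z* v$5 - (163/1200* v$3 - v$5) = 0"
      using E[of 5] by (simp add: sum_5 Js)
    from stab_alg[OF rz E1 E2 E3 E4 E5] have "v = 0"
      unfolding vec_eq_iff using exhaust_5 by (metis zero_index)
    with v show False by simp
  qed
qed

definition qu :: "real \<Rightarrow> real" where
  "qu r = r^4 + 1229/80*r^3 + 13799/320*r^2 + 156337/5120*r - 57/1280"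

lemma qu_root: "\<exists>r>0. qu r = 0"
proof -
  have "continuous_on {0..1/10} qu" unfolding qu_def by (intro continuous_intros)
  moreover have "qu 0 \<le> 0" "0 \<le> qu (1/10)" by (simp_all add: qu_def)
  ultimately obtain r where r: "0 \<le> r" "r \<le> 1/10" "qu r = 0"
    using IVT'[of qu 0 0 "1/10"] by auto
  moreover have "r \<noteq> 0" using r by (auto simp: qu_def)
  ultimately show ?thesis by (metis order_le_less)
qed

lemma unstable_xu: "unstable_ss p0 xu"
proof -
  obtain r where r0: "r > 0" and qr: "qu r = 0" using qu_root by blast
  define u4 where "u4 = 1 / (r + 12)"
  define u5 where "u5 = 163/1200 / (r + 1)"
  define u1 where "u1 = (239/20 * u4 - 2625/652 * u5) / (r + 13/10)"
  define u2 where "u2 = - (u1 + 1 + u4)"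
  have nz: "r + 12 \<noteq> 0" "r + 1 \<noteq> 0" "r + 13/10 \<noteq> 0" "r + 1/20 \<noteq> 0" using r0 by auto
  have R4u: "u4 * (r + 12) = 1" unfolding u4_def using nz(1) by (metis divide_eq_eq)
  have R5u: "u5 * (r + 1) = 163/1200" unfolding u5_def using nz(2) by (metis divide_eq_eq)
  have R1u: "u1 * (r + 13/10) = 239/20 * u4 - 2625/652 * u5" unfolding u1_def using nz(3) by (metis divide_eq_eq)
  have R1: "r*u1 - (-(13/10)*u1 + 239/20*u4 - 2625/652*u5) = 0"
    using R1u by (simp add: algebra_simps)
  have R4: "r*u4 - (1 - 12*u4) = 0" using R4u by (simp add: algebra_simps)
  have R5: "r*u5 - (163/1200*1 - u5) = 0" using R5u by (simp add: algebra_simps)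
  have "- (r*u2 - (u1 - 1/16*u2 - 525/163*u5)) * ((r + 12) * (r + 1) * (r + 13/10)) =
      (r + 17/16) * (r + 12) * (r + 1) * (u1 * (r + 13/10)) + (r + 1/16) * (r + 12) * (r + 1) * (r + 13/10)
      + (r + 1/16) * (r + 1) * (r + 13/10) * (u4 * (r + 12)) - 525/163 * (r + 12) * (r + 13/10) * (u5 * (r + 1))"
    unfolding u2_def by algebra
  also have "\<dots> = (r + 17/16) * (239/20 * (r + 1) * (u4 * (r + 12)) - 2625/652 * (r + 12) * (u5 * (r + 1)))
      + (r + 1/16) * (r + 12) * (r + 1) * (r + 13/10)
      + (r + 1/16) * (r + 1) * (r + 13/10) * (u4 * (r + 12)) - 525/163 * (r + 12) * (r + 13/10) * (u5 * (r + 1))"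
    unfolding R1u by algebra
  also have "\<dots> = (r + 17/16) * (239/20 * (r + 1) * 1 - 2625/652 * (r + 12) * (163/1200))
      + (r + 1/16) * (r + 12) * (r + 1) * (r + 13/10)
      + (r + 1/16) * (r + 1) * (r + 13/10) * 1 - 525/163 * (r + 12) * (r + 13/10) * (163/1200)"
    unfolding R4u R5u ..
  also have "\<dots> = qu r" unfolding qu_def by algebra
  finally have "- (r*u2 - (u1 - 1/16*u2 - 525/163*u5)) * ((r + 12) * (r + 1) * (r + 13/10)) = 0"
    using qr by simp
  then have R2: "r*u2 - (u1 - 1/16*u2 - 525/163*u5) = 0" using nz by simp
  have S0: "(r + 1/20) * (u1 + u2 + 1 + u4) = 0" unfolding u2_def by simp
  have R3: "r*1 - (1/4*u1 + 1/80*u2 - 21/20*1 + 4725/652*u5) = 0"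
  proof -
    have "r*1 - (1/4*u1 + 1/80*u2 - 21/20*1 + 4725/652*u5) =
      (r + 1/20) * (u1 + u2 + 1 + u4) - (r*u1 - (-(13/10)*u1 + 239/20*u4 - 2625/652*u5))
      - (r*u2 - (u1 - 1/16*u2 - 525/163*u5)) - (r*u4 - (1 - 12*u4))" (is "_ = ?X") by algebra
    also have "?X = 0" unfolding S0 R1 R2 R4 by simp
    finally show ?thesis .
  qed
  define v :: "complex^5" where "v = (\<chi> i. complex_of_real (vec5 u1 u2 1 u4 u5 $ i))"
  let ?M = "(\<chi> i j. (if i = j then complex_of_real r else 0) - complex_of_real (jacobian p0 xu $i$j)) :: complex^5^5"
  have v3: "v $ 3 = 1" unfolding v_def by simp
  then have vnz: "v \<noteq> 0" by auto
  have c1: "(?M *v v) $ 1 = complex_of_real (r*u1 - (-(13/10)*u1 + 239/20*u4 - 2625/652*u5))"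
    unfolding mv_nth sum_5 Ju by (simp add: v_def)
  have c2: "(?M *v v) $ 2 = complex_of_real (r*u2 - (u1 - 1/16*u2 - 525/163*u5))"
    unfolding mv_nth sum_5 Ju by (simp add: v_def)
  have c3: "(?M *v v) $ 3 = complex_of_real (r*1 - (1/4*u1 + 1/80*u2 - 21/20*1 + 4725/652*u5))"
    unfolding mv_nth sum_5 Ju by (simp add: v_def)
  have c4: "(?M *v v) $ 4 = complex_of_real (r*u4 - (1 - 12*u4))"
    unfolding mv_nth sum_5 Ju by (simp add: v_def)
  have c5: "(?M *v v) $ 5 = complex_of_real (r*u5 - (163/1200*1 - u5))"
    unfolding mv_nth sum_5 Ju by (simp add: v_def)
  have "?M *v v = 0"
    unfolding vec_eq_iff
  proof
    fix i :: 5
    show "(?M *v v) $ i = 0 $ i"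
      using exhaust_5[of i] c1[unfolded R1] c2[unfolded R2] c3[unfolded R3] c4[unfolded R4] c5[unfolded R5]
      by (elim disjE) simp_all
  qed
  then have "eigenvalue (jacobian p0 xu) (complex_of_real r)"
    unfolding eig_iff using vnz by blast
  then show ?thesis unfolding unstable_ss_def using r0 by (intro exI[of _ "complex_of_real r"]) simp
qed

theorem theorem2:
  shows "\<exists>p. params_pos p \<and> R0 p < 1 \<and>
     (\<exists>x1 x2. x1 \<noteq> x2 \<and>
        {x. positive_state x \<and> steady_state p x} = {x1, x2} \<and>
        stable_ss p x1 \<and> unstable_ss p x2)"
proof (intro exI conjI)
  show "params_pos p0" by (simp add: params_pos_def p0_def)
  show "R0 p0 < 1" by (simp add: R0_def p0_def Let_def)
  show "xs \<noteq> xu" unfolding xs_def xu_def vec5_eq by simp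
  show "{x. positive_state x \<and> steady_state p0 x} = {xs, xu}"
    using ss_only ss_xs ss_xu by blast
  show "stable_ss p0 xs" by (rule stable_xs)
  show "unstable_ss p0 xu" by (rule unstable_xu)
qed
end
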